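(* Let $(S,+)$ be an infinite left weakly cancellative semigroup with no idempotent element, and let $\langle x_n\rangle_{n=1}^\infty$ be a sequence in $S$. Then there exists a sum subsystem $\langle y_n\rangle_{n=1}^\infty$ of $\langle x_n\rangle_{n=1}^\infty$ which satisfies finiteness of finite sums.
   Context: $S$ is left weakly cancellative if for all $a,b\in S$ the set $\{x\in S: a+x=b\}$ is finite; $e$ is idempotent if $e+e=e$. $\mathcal{P}_f(\mathbb{N})$ denotes the set of nonempty finite subsets of $\mathbb{N}=\{1,2,\dots\}$, and $\sum_{n\in H}x_n$ is the sum in increasing order of indices. A sequence $\langle y_n\rangle_{n=1}^\infty$ is a sum subsystem of $\langle x_n\rangle_{n=1}^\infty$ if there is a sequence $\langle H_n\rangle_{n=1}^\infty$ in $\mathcal{P}_f(\mathbb{N})$ with $\max H_n<\min H_{n+1}$ and $y_n=\sum_{t\in H_n}x_t$ for all $n$. A sequence $\langle y_n\rangle_{n=1}^\infty$ satisfies finiteness of finite sums if for all $H_1,H_2\in\mathcal{P}_f(\mathbb{N})$ with $\max H_1\neq\max H_2$ one has $\sum_{n\in H_1}y_n\neq\sum_{n\in H_2}y_n$. *)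

theory Defs
  imports Main
begin

fun lsum :: "('b \<Rightarrow> 'a::semigroup_add) \<Rightarrow> 'b list \<Rightarrow> 'a" where
  "lsum x [] = undefined"
| "lsum x [h] = x h"
| "lsum x (h # t) = x h + lsum x t"

definition fsum :: "(nat \<Rightarrow> 'a::semigroup_add) \<Rightarrow> nat set \<Rightarrow> 'a" where
  "fsum x H = lsum x (sorted_list_of_set H)"

definition Pf :: "nat set set" where
  "Pf = {H. finite H \<and> H \<noteq> {} \<and> H \<subseteq> {1..}}"

definition left_weakly_cancellative :: "'a::semigroup_add itself \<Rightarrow> bool" where
  "left_weakly_cancellative _ \<longleftrightarrow> (\<forall>a b::'a. finite {x. a + x = b})"

definition sum_subsystem :: "(nat \<Rightarrow> 'a::semigroup_add) \<Rightarrow> (nat \<Rightarrow> 'a) \<Rightarrow> bool" where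
  "sum_subsystem y x \<longleftrightarrow> (\<exists>H :: nat \<Rightarrow> nat set.
      (\<forall>n\<ge>1. H n \<in> Pf \<and> Max (H n) < Min (H (Suc n)) \<and> y n = fsum x (H n)))"

definition finiteness_of_finite_sums :: "(nat \<Rightarrow> 'a::semigroup_add) \<Rightarrow> bool" where
  "finiteness_of_finite_sums y \<longleftrightarrow> (\<forall>H1\<in>Pf. \<forall>H2\<in>Pf.
      Max H1 \<noteq> Max H2 \<longrightarrow> fsum y H1 \<noteq> fsum y H2)"

end

theory Submission
  imports Defs
begin

lemma lsum_snoc: "l \<noteq> [] \<Longrightarrow> lsum x (l @ [m]) = lsum x l + x m"
proof (induction l rule: induct_list012)
  case (3 a b t)
  then show ?case by (cases "t @ [m]") (auto simp: add.assoc)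
qed auto

lemma sorted_split_max:
  assumes "finite H" "H \<noteq> {}" "H \<noteq> {Max H}"
  shows "sorted_list_of_set H = sorted_list_of_set (H - {Max H}) @ [Max H]"
proof (rule sorted_distinct_set_unique)
  have "\<forall>y\<in>H - {Max H}. y \<le> Max H" using assms by auto
  then show "sorted (sorted_list_of_set (H - {Max H}) @ [Max H])"
    using assms by (auto simp: sorted_append)
  show "distinct (sorted_list_of_set (H - {Max H}) @ [Max H])" using assms by auto
  show "set (sorted_list_of_set H) = set (sorted_list_of_set (H - {Max H}) @ [Max H])"
    using assms Max_in by auto
qed auto

lemma fsum_split_max:
  assumes "finite H" "H \<noteq> {}" "H \<noteq> {Max H}"
  shows "fsum x H = fsum x (H - {Max H}) + x (Max H)"
proof -
  have "H - {Max H} \<noteq> {}" using assms Max_in by blast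
  then have "sorted_list_of_set (H - {Max H}) \<noteq> []" using assms by auto
  then show ?thesis unfolding fsum_def using sorted_split_max[OF assms] lsum_snoc by metis
qed

lemma fsum_single: "fsum x {j} = x j"
  by (simp add: fsum_def)

fun npow :: "'a::semigroup_add \<Rightarrow> nat \<Rightarrow> 'a" where
  "npow v 0 = v"
| "npow v (Suc n) = npow v n + v"

lemma npow_add: "npow v (a + b + 1) = npow v a + npow v b"
  by (induction b) (auto simp: add.assoc)

lemma lsum_const: "l \<noteq> [] \<Longrightarrow> \<forall>i\<in>set l. x i = v \<Longrightarrow> lsum x l = npow v (length l - 1)"
proof (induction l rule: induct_list012)
  case (3 a b t)
  then have "lsum x (a # b # t) = v + npow v (length t)" by auto
  also have "\<dots> = npow v (0 + length t + 1)" by (simp only: npow_add) simp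
  finally show ?case by simp
qed auto

lemma npow_inj:
  assumes "\<forall>e::'a::semigroup_add. e + e \<noteq> e"
  shows "inj (npow (v::'a))"
proof (rule injI, rule ccontr)
  fix p q assume eq0: "npow v p = npow v q" and "p \<noteq> q"
  then have "\<exists>p q. p < q \<and> npow v p = npow v q" by (metis linorder_neqE_nat)
  then obtain p q where pq: "p < q" and eq: "npow v p = npow v q" by blast
  define d where "d = q - p"
  have d1: "d \<ge> 1" using pq d_def by simp
  have step: "npow v (n + d) = npow v n" if "n \<ge> p" for n
  proof (cases "n = p")
    case True then show ?thesis using eq pq d_def by simp
  next
    case False
    define r where "r = n - p - 1"
    have r: "n = p + r + 1" using that False r_def by simp
    have "npow v (n + d) = npow v (q + r + 1)" using r d_def pq by (simp add: add.commute)
    also have "\<dots> = npow v q + npow v r" by (rule npow_add)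
    also have "\<dots> = npow v p + npow v r" using eq by simp
    also have "\<dots> = npow v n" using r npow_add by metis
    finally show ?thesis .
  qed
  have stepk: "npow v (n + k * d) = npow v n" if "n \<ge> p" for n k
  proof (induction k)
    case (Suc k)
    have "npow v (n + Suc k * d) = npow v ((n + k * d) + d)" by (simp add: algebra_simps)
    also have "\<dots> = npow v (n + k * d)" using step that by simp
    finally show ?case using Suc by simp
  qed simp
  define N where "N = (p + 1) * d - 1"
  have N1: "N + 1 = (p + 1) * d" using d1 N_def by (simp add: Suc_le_eq)
  have "(p + 1) * d \<ge> (p + 1) * 1" using d1 by (rule mult_le_mono2)
  then have Np: "N \<ge> p" using N1 by simp
  have "npow v N + npow v N = npow v (N + N + 1)" using npow_add by metis
  also have "\<dots> = npow v (N + (p + 1) * d)" by (metis N1 add.assoc)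
  also have "\<dots> = npow v N" using stepk Np by blast
  finally show False using assms by blast
qed

lemma block_sums_infinite:
  fixes x :: "nat \<Rightarrow> 'a::semigroup_add"
  assumes "\<forall>e::'a. e + e \<noteq> e"
  shows "infinite {fsum x H | H. finite H \<and> H \<noteq> {} \<and> H \<subseteq> {k<..}}"
    (is "infinite ?V")
proof (cases "finite (x ` {k<..})")
  case False
  have "x ` {k<..} \<subseteq> ?V"
  proof
    fix z assume "z \<in> x ` {k<..}"
    then obtain j where "j > k" "z = x j" by auto
    then show "z \<in> ?V" using fsum_single[of x j] by (intro CollectI exI[of _ "{j}"]) auto
  qed
  then show ?thesis using False finite_subset by blast
next
  case True
  have "infinite {k<..}" by (rule infinite_Ioi)
  then obtain j0 where "j0 \<in> {k<..}" and inf: "infinite {j\<in>{k<..}. x j = x j0}"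
    using pigeonhole_infinite[OF _ True] by blast
  define v where "v = x j0"
  have "range (npow v) \<subseteq> ?V"
  proof
    fix z assume "z \<in> range (npow v)"
    then obtain n where z: "z = npow v n" by auto
    obtain B where B: "finite B" "card B = Suc n" "B \<subseteq> {j\<in>{k<..}. x j = x j0}"
      using infinite_arbitrarily_large[OF inf] by blast
    have Bne: "B \<noteq> {}" using B by auto
    have "fsum x B = npow v (length (sorted_list_of_set B) - 1)"
      unfolding fsum_def using B Bne v_def by (intro lsum_const) auto
    also have "\<dots> = z" using B z by simp
    finally show "z \<in> ?V" using B Bne by blast
  qed
  moreover have "infinite (range (npow v))"
    using npow_inj[OF assms] finite_imageD by blast
  ultimately show ?thesis using finite_subset by blast
qed

definition bad :: "'a::semigroup_add set \<Rightarrow> 'a set" where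
  "bad F = F \<union> (\<Union>a\<in>F. \<Union>b\<in>F. {z. a + z = b})"

lemma bad_finite:
  assumes "left_weakly_cancellative TYPE('a::semigroup_add)" "finite (F::'a set)"
  shows "finite (bad F)"
  using assms unfolding bad_def left_weakly_cancellative_def by auto

primrec st :: "(nat \<Rightarrow> 'a::semigroup_add) \<Rightarrow> nat \<Rightarrow> nat set \<times> 'a set" where
  "st x 0 = ({0}, {})"
| "st x (Suc n) = (let H = (SOME H. finite H \<and> H \<noteq> {} \<and> H \<subseteq> {Max (fst (st x n))<..}
        \<and> fsum x H \<notin> bad (snd (st x n))); yv = fsum x H
     in (H, snd (st x n) \<union> {yv} \<union> (\<lambda>a. a + yv) ` snd (st x n)))"

theorem lemma2p3:
  fixes x :: "nat \<Rightarrow> 'a::semigroup_add"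
  assumes "infinite (UNIV :: 'a set)"
    and "left_weakly_cancellative TYPE('a)"
    and "\<forall>e::'a. e + e \<noteq> e"
  shows "\<exists>y. sum_subsystem y x \<and> finiteness_of_finite_sums y"
proof -
  define G where "G n = fst (st x n)" for n
  define F where "F n = snd (st x n)" for n
  define y where "y n = fsum x (G n)" for n
  define P where "P n H \<longleftrightarrow> finite H \<and> H \<noteq> {} \<and> H \<subseteq> {Max (G n)<..} \<and> fsum x H \<notin> bad (F n)" for n H
  have GS: "G (Suc n) = (SOME H. P n H)" for n
    unfolding G_def P_def F_def by (simp add: Let_def)
  have FS: "F (Suc n) = F n \<union> {y (Suc n)} \<union> (\<lambda>a. a + y (Suc n)) ` F n" for n
    unfolding y_def GS unfolding F_def P_def G_def by (simp add: Let_def)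
  have F0: "F 0 = {}" unfolding F_def by simp
  have G0: "G 0 = {0}" unfolding G_def by simp
  have ok: "finite (F n) \<and> finite (G n) \<and> G n \<noteq> {} \<and> (n \<ge> 1 \<longrightarrow> P (n - 1) (G n))" for n
  proof (induction n)
    case 0 then show ?case using F0 G0 by simp
  next
    case (Suc n)
    then have fin: "finite (bad (F n))" using bad_finite[OF assms(2)] by blast
    have "infinite {fsum x H | H. finite H \<and> H \<noteq> {} \<and> H \<subseteq> {Max (G n)<..}}"
      by (rule block_sums_infinite[OF assms(3)])
    then obtain z where "z \<in> {fsum x H | H. finite H \<and> H \<noteq> {} \<and> H \<subseteq> {Max (G n)<..}}"
      "z \<notin> bad (F n)" using fin by (meson finite_subset subsetI)
    then have "\<exists>H. P n H" unfolding P_def by blast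
    then have "P n (G (Suc n))" unfolding GS by (rule someI_ex)
    then show ?case using Suc FS unfolding P_def by auto
  qed
  have Pn: "P n (G (Suc n))" for n using ok[of "Suc n"] by simp
  have sub: "sum_subsystem y x"
    unfolding sum_subsystem_def
  proof (intro exI[of _ G] allI impI conjI)
    fix n :: nat assume n1: "n \<ge> 1"
    have P1: "P (n - 1) (G n)" using ok[of n] n1 by simp
    have "G n \<subseteq> {1..}"
    proof
      fix i assume "i \<in> G n"
      then have "i > Max (G (n - 1))" using P1 unfolding P_def by auto
      then show "i \<in> {1..}" by simp
    qed
    then show "G n \<in> Pf" unfolding Pf_def using ok[of n] by auto
    have "G (Suc n) \<subseteq> {Max (G n)<..}" "finite (G (Suc n))" "G (Suc n) \<noteq> {}"
      using Pn[of n] unfolding P_def by auto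
    then show "Max (G n) < Min (G (Suc n))" using Min_in by fastforce
    show "y n = fsum x (G n)" by (simp add: y_def)
  qed
  have inF: "H \<in> Pf \<Longrightarrow> Max H \<le> n \<Longrightarrow> fsum y H \<in> F n" for n H
  proof (induction n arbitrary: H)
    case 0
    have "finite H" "H \<noteq> {}" "H \<subseteq> {1..}" using 0 unfolding Pf_def by auto
    then have "Max H \<in> {1..}" using Max_in by blast
    then show ?case using 0 by simp
  next
    case (Suc n)
    have mono: "F n \<subseteq> F (Suc n)" unfolding FS[of n] by blast
    have Hf: "finite H" "H \<noteq> {}" "H \<subseteq> {1..}" using Suc.prems unfolding Pf_def by auto
    show ?case
    proof (cases "Max H \<le> n")
      case True then show ?thesis using Suc.IH[OF Suc.prems(1) True] mono by blast
    next
      case False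
      then have m: "Max H = Suc n" using Suc.prems by simp
      show ?thesis
      proof (cases "H = {Max H}")
        case True
        then have "fsum y H = y (Suc n)" using m fsum_single by metis
        then show ?thesis unfolding FS[of n] by blast
      next
        case False
        let ?H' = "H - {Max H}"
        have sp: "fsum y H = fsum y ?H' + y (Suc n)" using fsum_split_max[OF Hf(1,2) False] m by simp
        have ne: "?H' \<noteq> {}" using False Hf Max_in by blast
        have "?H' \<in> Pf" using Hf ne unfolding Pf_def by auto
        moreover have "Max ?H' \<le> n"
        proof -
          have "Max ?H' \<in> ?H'" using ne Hf by (intro Max_in) auto
          then have "Max ?H' \<le> Max H \<and> Max ?H' \<noteq> Max H" using Hf by auto
          then show ?thesis using m by simp
        qed
        ultimately have "fsum y ?H' \<in> F n" using Suc.IH by blast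
        then show ?thesis unfolding sp FS[of n] by blast
      qed
    qed
  qed
  have ynb: "y (Suc n) \<notin> bad (F n)" for n using Pn[of n] unfolding P_def y_def by auto
  have main: "fsum y H1 \<noteq> fsum y H2" if H1: "H1 \<in> Pf" and H2: "H2 \<in> Pf" and lt: "Max H1 < Max H2" for H1 H2
  proof -
    obtain n where m: "Max H2 = Suc n" using lt by (cases "Max H2") auto
    have b: "fsum y H1 \<in> F n" using inF H1 lt m by simp
    have Hf: "finite H2" "H2 \<noteq> {}" using H2 unfolding Pf_def by auto
    show ?thesis
    proof (cases "H2 = {Max H2}")
      case True
      then have "fsum y H2 = y (Suc n)" using m fsum_single by metis
      then show ?thesis using b ynb[of n] unfolding bad_def by auto
    next
      case False
      let ?H' = "H2 - {Max H2}"
      have sp: "fsum y H2 = fsum y ?H' + y (Suc n)" using fsum_split_max[OF Hf False] m by simp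
      have ne: "?H' \<noteq> {}" using False Hf Max_in by blast
      have "?H' \<in> Pf" using H2 ne unfolding Pf_def by auto
      moreover have "Max ?H' \<le> n"
      proof -
        have "Max ?H' \<in> ?H'" using ne Hf by (intro Max_in) auto
        then have "Max ?H' \<le> Max H2 \<and> Max ?H' \<noteq> Max H2" using Hf by auto
        then show ?thesis using m by simp
      qed
      ultimately have "fsum y ?H' \<in> F n" using inF by blast
      then show ?thesis using sp b ynb[of n] unfolding bad_def by auto
    qed
  qed
  have "finiteness_of_finite_sums y"
    unfolding finiteness_of_finite_sums_def
  proof (intro ballI impI)
    fix H1 H2 assume "H1 \<in> Pf" "H2 \<in> Pf" "Max H1 \<noteq> Max H2"
    then show "fsum y H1 \<noteq> fsum y H2"
      using main by (metis linorder_neqE_nat)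
  qed
  then show ?thesis using sub by blast
qed

end
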